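(* Let $k,t\ge1$ with $t$ a power of two and $k\le t/6$. Then there exists a valid perfect randomized $[t,k]$-interval system $\mathcal{F}$ with $\mathrm{val}(\mathcal{F})\le \dfrac{10k^2\log(t)}{t}$ (logarithm base 2).
   Context: An interval is a nonempty set $\{a,\ldots,b\}$ of integers; a $[t,k]$-interval system is a set of $k$ pairwise disjoint intervals contained in $[t]$; a randomized one is a distribution over such systems. $\mathrm{val}(F)=\sum_{I\in F}1/|I|$, $\mathrm{val}(\mathcal{F})=\mathbb{E}_{F\sim\mathcal{F}}\mathrm{val}(F)$. $\mathrm{Sets}(F)$ is the distribution of the set obtained by choosing independently a uniform element from each interval of $F$; $\mathrm{Sets}(\mathcal{F})$ samples $F\sim\mathcal{F}$ then a set from $\mathrm{Sets}(F)$. $\mathcal{F}$ is perfect if $\mathrm{Sets}(\mathcal{F})$ is uniform over all $k$-element subsets of $[t]$. $F$ is valid if $\sum_{I\in F}|I|\le t/2$; $\mathcal{F}$ is valid if all systems in its support are valid. *)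

theory Defs
  imports "HOL-Probability.Probability"
begin

text \<open>An interval is a nonempty set {a..b} of integers (here naturals, since
  all intervals considered lie in [t] = {1..t}).\<close>
definition is_interval :: "nat set \<Rightarrow> bool" where
  "is_interval I \<longleftrightarrow> (\<exists>a b. a \<le> b \<and> I = {a..b})"

definition interval_system :: "nat \<Rightarrow> nat \<Rightarrow> nat set set \<Rightarrow> bool" where
  "interval_system t k F \<longleftrightarrow>
     finite F \<and> card F = k \<and>
     (\<forall>I\<in>F. is_interval I \<and> I \<subseteq> {1..t}) \<and>
     (\<forall>I\<in>F. \<forall>J\<in>F. I \<noteq> J \<longrightarrow> I \<inter> J = {})"

definition val_sys :: "nat set set \<Rightarrow> real" where
  "val_sys F = (\<Sum>I\<in>F. 1 / real (card I))"

definition val_rand :: "nat set set pmf \<Rightarrow> real" where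
  "val_rand \<F> = measure_pmf.expectation \<F> val_sys"

definition Sets_sys :: "nat set set \<Rightarrow> nat set pmf" where
  "Sets_sys F = map_pmf (\<lambda>f. f ` F) (Pi_pmf F undefined (\<lambda>I. pmf_of_set I))"

definition Sets_rand :: "nat set set pmf \<Rightarrow> nat set pmf" where
  "Sets_rand \<F> = bind_pmf \<F> Sets_sys"

definition perfect :: "nat \<Rightarrow> nat \<Rightarrow> nat set set pmf \<Rightarrow> bool" where
  "perfect t k \<F> \<longleftrightarrow> Sets_rand \<F> = pmf_of_set {S. S \<subseteq> {1..t} \<and> card S = k}"

definition valid_sys :: "nat \<Rightarrow> nat set set \<Rightarrow> bool" where
  "valid_sys t F \<longleftrightarrow> real (\<Sum>I\<in>F. card I) \<le> real t / 2"

definition valid_rand :: "nat \<Rightarrow> nat set set pmf \<Rightarrow> bool" where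
  "valid_rand t \<F> \<longleftrightarrow> (\<forall>F\<in>set_pmf \<F>. valid_sys t F)"

end

theory Submission
  imports Defs
begin


definition blk :: "nat \<Rightarrow> nat \<Rightarrow> nat" where "blk l x = (x - 1) div 2^l"
definition Dy :: "nat \<Rightarrow> nat \<Rightarrow> nat set" where
  "Dy e x = {blk e x * 2^e + 1 .. blk e x * 2^e + 2^e}"

lemma div_pow2_iff: "(z::nat) div 2^e = b \<longleftrightarrow> b * 2^e \<le> z \<and> z < b * 2^e + 2^e"
proof
  assume "z div 2^e = b"
  moreover have "z div 2^e * 2^e \<le> z" by (rule div_times_less_eq_dividend)
  moreover have "z < z div 2^e * 2^e + 2^e"
    by (metis add.commute mod_less_divisor mod_mult_div_eq mult.commute nat_add_left_cancel_less zero_less_numeral zero_less_power)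
  ultimately show "b * 2^e \<le> z \<and> z < b * 2^e + 2^e" by auto
next
  assume "b * 2^e \<le> z \<and> z < b * 2^e + 2^e"
  then show "z div 2^e = b" by (intro div_nat_eqI) (auto simp: mult.commute)
qed

lemma mem_Dy: "y \<in> Dy e x \<longleftrightarrow> 1 \<le> y \<and> blk e y = blk e x"
  unfolding Dy_def blk_def div_pow2_iff by auto

lemma card_Dy: "card (Dy e x) = 2^e"
  unfolding Dy_def by simp

lemma blk_mono: assumes "blk l x = blk l y" "l \<le> l'" shows "blk l' x = blk l' y"
proof -
  obtain d where d: "l' = l + d" using assms(2) le_Suc_ex by blast
  have "blk l' z = blk l z div 2^d" for z
    unfolding blk_def d by (simp add: power_add div_mult2_eq)
  then show ?thesis using assms(1) by simp
qed

lemma blk0: "blk 0 x = x - 1" unfolding blk_def by simp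

lemma blk_eq0_inj: "1 \<le> x \<Longrightarrow> 1 \<le> y \<Longrightarrow> blk 0 x = blk 0 y \<Longrightarrow> x = y"
  by (simp add: blk0)

lemma blk_top: "x \<in> {1..2^m} \<Longrightarrow> blk m x = 0"
  unfolding blk_def by auto

lemma Dy_sub: assumes "x \<in> {1..2^m}" "e \<le> m" shows "Dy e x \<subseteq> {1..2^m}"
proof
  fix y assume "y \<in> Dy e x"
  then have "1 \<le> y" "blk e y = blk e x" by (auto simp: mem_Dy)
  then have "blk m y = blk m x" using blk_mono assms(2) by blast
  then have "blk m y = 0" using blk_top assms(1) by simp
  then have "y - 1 < 2^m" unfolding blk_def by (simp add: div_eq_0_iff)
  with \<open>1 \<le> y\<close> show "y \<in> {1..2^m}" by auto
qed

lemma self_Dy: "1 \<le> x \<Longrightarrow> x \<in> Dy e x" by (simp add: mem_Dy)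

lemma Dy_interval: "is_interval (Dy e x)"
  unfolding is_interval_def Dy_def by (intro exI[of _ "blk e x * 2^e + 1"] exI[of _ "blk e x * 2^e + 2^e"]) simp

lemma Dy_cong: "blk e x = blk e y \<Longrightarrow> Dy e x = Dy e y" unfolding Dy_def by simp

definition lmin :: "nat \<Rightarrow> nat set \<Rightarrow> nat \<Rightarrow> nat" where
  "lmin m S s = (LEAST l. l = m \<or> (\<exists>s'\<in>S. s' \<noteq> s \<and> blk l s = blk l s'))"

definition ex :: "nat \<Rightarrow> nat set \<Rightarrow> nat \<Rightarrow> nat" where "ex m S s = lmin m S s - 3"

lemma lmin_le_m: "lmin m S s \<le> m"
  unfolding lmin_def by (rule Least_le) simp

lemma lmin_le: "s' \<in> S \<Longrightarrow> s' \<noteq> s \<Longrightarrow> blk l s = blk l s' \<Longrightarrow> lmin m S s \<le> l"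
  unfolding lmin_def by (rule Least_le) blast

lemma lmin_P: "lmin m S s = m \<or> (\<exists>s'\<in>S. s' \<noteq> s \<and> blk (lmin m S s) s = blk (lmin m S s) s')"
  unfolding lmin_def by (rule LeastI[of _ m]) simp

lemma lmin_pos: assumes "1 \<le> m" "S \<subseteq> {1..}" "s \<in> S" shows "1 \<le> lmin m S s"
proof (rule ccontr)
  assume "\<not> 1 \<le> lmin m S s"
  then have z: "lmin m S s = 0" by simp
  from lmin_P[of m S s] z assms obtain s' where "s' \<in> S" "s' \<noteq> s" "blk 0 s = blk 0 s'" by auto
  then show False using blk_eq0_inj assms by (metis atLeast_iff subsetD)
qed

lemma ex_lt: assumes "1 \<le> m" "S \<subseteq> {1..}" "s \<in> S" shows "ex m S s < lmin m S s"
  using lmin_pos[OF assms] unfolding ex_def by simp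



lemma corr:
  assumes m: "1 \<le> m" and S: "S \<subseteq> {1..}" and s: "s \<in> S" and s': "s' \<in> S" "s' \<noteq> s"
    and x: "x \<in> Dy (ex m S s) s" and y: "y \<in> Dy (ex m S s') s'"
  shows "blk l x = blk l y \<longleftrightarrow> blk l s = blk l s'"
proof -
  define e where "e = ex m S s"
  define e' where "e' = ex m S s'"
  define M where "M = max e e'"
  have bx: "blk e x = blk e s" using x by (simp add: mem_Dy e_def)
  have by': "blk e' y = blk e' s'" using y by (simp add: mem_Dy e'_def)
  have hx: "blk l x = blk l s" if "M \<le> l" for l using blk_mono[OF bx] that M_def by simp
  have hy: "blk l y = blk l s'" if "M \<le> l" for l using blk_mono[OF by'] that M_def by simp
  have nM: "blk M s \<noteq> blk M s'"
  proof
    assume eq: "blk M s = blk M s'"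
    show False
    proof (cases "e' \<le> e")
      case True
      then have "M = e" by (simp add: M_def)
      then have "lmin m S s \<le> e" using lmin_le[OF s'(1) s'(2)] eq by simp
      then show False using ex_lt[OF m S s] e_def by simp
    next
      case False
      then have "M = e'" by (simp add: M_def)
      then have "lmin m S s' \<le> e'" using lmin_le[OF s s'(2)[symmetric]] eq by simp
      then show False using ex_lt[OF m S s'(1)] e'_def by simp
    qed
  qed
  show ?thesis
  proof (cases "M \<le> l")
    case True then show ?thesis using hx hy by simp
  next
    case False
    then have "l \<le> M" by simp
    have "blk l s \<noteq> blk l s'" using blk_mono[OF _ \<open>l \<le> M\<close>, of s s'] nM by blast
    moreover have "blk l x \<noteq> blk l y"
    proof
      assume "blk l x = blk l y"
      then have "blk M x = blk M y" using blk_mono \<open>l \<le> M\<close> by blast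
      then show False using hx hy nM by simp
    qed
    ultimately show ?thesis by simp
  qed
qed

lemma Dy_disj:
  assumes m: "1 \<le> m" and S: "S \<subseteq> {1..}" and s: "s \<in> S" and s': "s' \<in> S" "s' \<noteq> s"
  shows "Dy (ex m S s) s \<inter> Dy (ex m S s') s' = {}"
proof (rule ccontr)
  assume "Dy (ex m S s) s \<inter> Dy (ex m S s') s' \<noteq> {}"
  then obtain x where x: "x \<in> Dy (ex m S s) s" "x \<in> Dy (ex m S s') s'" by blast
  have "blk 0 s = blk 0 s'" using corr[OF m S s s' x(1) x(2), of 0] by simp
  then have "s = s'" using blk_eq0_inj S s s' by (meson atLeast_iff subsetD)
  then show False using s' by simp
qed

definition Gs :: "nat \<Rightarrow> nat set \<Rightarrow> nat set set" where
  "Gs m S = (\<lambda>s. Dy (ex m S s) s) ` S"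

lemma Dmap_inj:
  assumes m: "1 \<le> m" and S: "S \<subseteq> {1..}"
  shows "inj_on (\<lambda>s. Dy (ex m S s) s) S"
proof (rule inj_onI)
  fix s s' assume h: "s \<in> S" "s' \<in> S" "Dy (ex m S s) s = Dy (ex m S s') s'"
  show "s = s'"
  proof (rule ccontr)
    assume "s \<noteq> s'"
    then have "Dy (ex m S s) s \<inter> Dy (ex m S s') s' = {}" using Dy_disj[OF m S h(1) h(2)] by auto
    moreover have "s \<in> Dy (ex m S s) s" using self_Dy S h(1) by auto
    ultimately show False using h(3) by auto
  qed
qed

lemma G_inv:
  assumes m: "1 \<le> m" and S: "S \<subseteq> {1..}"
    and g: "\<And>s. s \<in> S \<Longrightarrow> g s \<in> Dy (ex m S s) s"
  shows "inj_on g S" and "Gs m (g ` S) = Gs m S"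
proof -
  show inj: "inj_on g S"
  proof (rule inj_onI)
    fix s s' assume h: "s \<in> S" "s' \<in> S" "g s = g s'"
    show "s = s'"
    proof (rule ccontr)
      assume "s \<noteq> s'"
      then have "s' \<noteq> s" by simp
      then have "Dy (ex m S s) s \<inter> Dy (ex m S s') s' = {}" by (rule Dy_disj[OF m S h(1) h(2)])
      moreover have "g s \<in> Dy (ex m S s) s" "g s \<in> Dy (ex m S s') s'" using g[OF h(1)] g[OF h(2)] h(3) by auto
      ultimately show False by blast
    qed
  qed
  have T1: "g ` S \<subseteq> {1..}" using g by (auto simp: mem_Dy)
  have lm: "lmin m (g ` S) (g s) = lmin m S s" if s: "s \<in> S" for s
  proof -
    have eqv: "(\<exists>y\<in>g ` S. y \<noteq> g s \<and> blk l (g s) = blk l y) \<longleftrightarrow> (\<exists>s'\<in>S. s' \<noteq> s \<and> blk l s = blk l s')" for l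
    proof
      assume "\<exists>y\<in>g ` S. y \<noteq> g s \<and> blk l (g s) = blk l y"
      then obtain s' where s': "s' \<in> S" "g s' \<noteq> g s" "blk l (g s) = blk l (g s')" by auto
      then have ne: "s' \<noteq> s" by auto
      have "blk l s = blk l s'"
        using corr[OF m S s s'(1) ne g[OF s] g[OF s'(1)], of l] s'(3) by simp
      then show "\<exists>s'\<in>S. s' \<noteq> s \<and> blk l s = blk l s'"
        using s'(1) ne by blast
    next
      assume "\<exists>s'\<in>S. s' \<noteq> s \<and> blk l s = blk l s'"
      then obtain s' where s': "s' \<in> S" "s' \<noteq> s" "blk l s = blk l s'" by auto
      then have "g s' \<noteq> g s" using inj s by (metis inj_on_eq_iff)
      moreover have "blk l (g s) = blk l (g s')"
        using corr[OF m S s s'(1) s'(2) g[OF s] g[OF s'(1)], of l] s'(3) by simp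
      ultimately show "\<exists>y\<in>g ` S. y \<noteq> g s \<and> blk l (g s) = blk l y"
        using s'(1) by blast
    qed
    have "(\<lambda>l. l = m \<or> (\<exists>y\<in>g ` S. y \<noteq> g s \<and> blk l (g s) = blk l y))
             = (\<lambda>l. l = m \<or> (\<exists>s'\<in>S. s' \<noteq> s \<and> blk l s = blk l s'))" by (rule ext, subst eqv, rule refl)
    then show ?thesis unfolding lmin_def by (rule arg_cong)
  qed
  have eq: "Dy (ex m (g ` S) (g s)) (g s) = Dy (ex m S s) s" if s: "s \<in> S" for s
  proof -
    have e1: "ex m (g ` S) (g s) = ex m S s" unfolding ex_def lm[OF s] by (rule refl)
    have e2: "blk (ex m S s) (g s) = blk (ex m S s) s" using g[OF s] unfolding mem_Dy by (rule conjunct2)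
    show ?thesis unfolding e1 by (rule Dy_cong[OF e2])
  qed
  show "Gs m (g ` S) = Gs m S" unfolding Gs_def image_image by (rule image_cong[OF refl eq])
qed



lemma Sets_sys_eq:
  assumes fin: "finite F" and ne: "\<And>I. I \<in> F \<Longrightarrow> finite I \<and> I \<noteq> {}"
    and disj: "\<And>I J. I \<in> F \<Longrightarrow> J \<in> F \<Longrightarrow> I \<noteq> J \<Longrightarrow> I \<inter> J = {}"
  shows "Sets_sys F = pmf_of_set ((\<lambda>f. f ` F) ` PiE_dflt F undefined (\<lambda>I. I))"
proof -
  have "Pi_pmf F undefined (\<lambda>I. pmf_of_set I) = pmf_of_set (PiE_dflt F undefined (\<lambda>I. I))"
    using fin ne by (intro Pi_pmf_of_set) auto
  moreover have "inj_on (\<lambda>f. f ` F) (PiE_dflt F undefined (\<lambda>I. I))"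
  proof (rule inj_onI)
    fix f f' assume f: "f \<in> PiE_dflt F undefined (\<lambda>I. I)" and f': "f' \<in> PiE_dflt F undefined (\<lambda>I. I)"
      and eq: "f ` F = f' ` F"
    show "f = f'"
    proof
      fix I show "f I = f' I"
      proof (cases "I \<in> F")
        case True
        then have "f I \<in> f' ` F" using eq by blast
        then obtain J where J: "J \<in> F" "f I = f' J" by auto
        have "f I \<in> I" "f' J \<in> J" using f f' True J(1) by (auto simp: PiE_dflt_def)
        then have fIJ: "f I \<in> I" "f I \<in> J" using J(2) by simp_all
        have "I = J"
        proof (rule ccontr)
          assume "I \<noteq> J"
          then have "I \<inter> J = {}" by (rule disj[OF True J(1)])
          then show False using fIJ by blast
        qed
        then show ?thesis using J by simp
      next
        case False then show ?thesis using f f' by (auto simp: PiE_dflt_def)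
      qed
    qed
  qed
  moreover have "PiE_dflt F undefined (\<lambda>I. I) \<noteq> {}" using ne by auto
  moreover have "finite (PiE_dflt F undefined (\<lambda>I. I))" using fin ne by auto
  ultimately show ?thesis unfolding Sets_sys_def using map_pmf_of_set_inj by metis
qed

definition As :: "nat \<Rightarrow> nat set \<Rightarrow> nat set set" where
  "As m S = {g ` S | g. \<forall>s\<in>S. g s \<in> Dy (ex m S s) s}"

lemma image_PiE_As:
  assumes m: "1 \<le> m" and S: "S \<subseteq> {1..}"
  shows "(\<lambda>f. f ` Gs m S) ` PiE_dflt (Gs m S) undefined (\<lambda>I. I) = As m S"
proof -
  define Dm where "Dm = (\<lambda>s. Dy (ex m S s) s)"
  have inj: "inj_on Dm S" using Dmap_inj[OF m S] Dm_def by simp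
  have G: "Gs m S = Dm ` S" by (simp add: Gs_def Dm_def)
  show ?thesis
  proof
    show "(\<lambda>f. f ` Gs m S) ` PiE_dflt (Gs m S) undefined (\<lambda>I. I) \<subseteq> As m S"
    proof
      fix T assume "T \<in> (\<lambda>f. f ` Gs m S) ` PiE_dflt (Gs m S) undefined (\<lambda>I. I)"
      then obtain f where f: "f \<in> PiE_dflt (Gs m S) undefined (\<lambda>I. I)" "T = f ` Gs m S" by auto
      have "T = (f \<circ> Dm) ` S" using f(2) G by (simp add: image_comp)
      moreover have "\<forall>s\<in>S. (f \<circ> Dm) s \<in> Dy (ex m S s) s" using f(1) G by (auto simp: PiE_dflt_def Dm_def)
      ultimately show "T \<in> As m S" unfolding As_def by blast
    qed
  next
    show "As m S \<subseteq> (\<lambda>f. f ` Gs m S) ` PiE_dflt (Gs m S) undefined (\<lambda>I. I)"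
    proof
      fix T assume "T \<in> As m S"
      then obtain g where g: "\<forall>s\<in>S. g s \<in> Dm s" "T = g ` S" unfolding As_def Dm_def by auto
      define f where "f = (\<lambda>I. if I \<in> Gs m S then g (inv_into S Dm I) else undefined)"
      have fD: "f (Dm s) = g s" if "s \<in> S" for s
        using that inj G by (simp add: f_def inv_into_f_f)
      have "f \<in> PiE_dflt (Gs m S) undefined (\<lambda>I. I)"
        unfolding PiE_dflt_def using fD g(1) G by (auto simp: f_def)
      moreover have "f ` Gs m S = T" using fD g(2) G by (auto simp: image_image)
      ultimately show "T \<in> (\<lambda>f. f ` Gs m S) ` PiE_dflt (Gs m S) undefined (\<lambda>I. I)" by blast
    qed
  qed
qed

lemma Sets_sys_Gs:
  assumes m: "1 \<le> m" and S: "S \<subseteq> {1..}" "finite S"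
  shows "Sets_sys (Gs m S) = pmf_of_set (As m S)"
proof -
  have "Sets_sys (Gs m S) = pmf_of_set ((\<lambda>f. f ` Gs m S) ` PiE_dflt (Gs m S) undefined (\<lambda>I. I))"
  proof (rule Sets_sys_eq)
    show "finite (Gs m S)" using S by (simp add: Gs_def)
    show "finite I \<and> I \<noteq> {}" if "I \<in> Gs m S" for I
      using that S by (auto simp: Gs_def Dy_def)
    show "I \<inter> J = {}" if "I \<in> Gs m S" "J \<in> Gs m S" "I \<noteq> J" for I J
      using that Dy_disj[OF m S(1)] unfolding Gs_def by auto
  qed
  then show ?thesis using image_PiE_As[OF m S(1)] by simp
qed

lemma bind_classes:
  assumes fin: "finite K" and ne: "K \<noteq> {}"
    and A: "\<And>S. S \<in> K \<Longrightarrow> A S \<subseteq> K \<and> S \<in> A S \<and> (\<forall>T\<in>A S. A T = A S)"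
  shows "bind_pmf (pmf_of_set K) (\<lambda>S. pmf_of_set (A S)) = pmf_of_set K"
proof (rule pmf_eqI)
  fix T
  have finA: "finite (A S)" "A S \<noteq> {}" if "S \<in> K" for S
  proof -
    have "A S \<subseteq> K" "S \<in> A S" using A[OF that] by blast+
    then show "finite (A S)" "A S \<noteq> {}" using fin by (auto intro: finite_subset)
  qed
  have lhs: "pmf (bind_pmf (pmf_of_set K) (\<lambda>S. pmf_of_set (A S))) T =
     (\<Sum>S\<in>K. pmf (pmf_of_set (A S)) T) / real (card K)"
    by (rule pmf_bind_pmf_of_set[OF ne fin])
  show "pmf (bind_pmf (pmf_of_set K) (\<lambda>S. pmf_of_set (A S))) T = pmf (pmf_of_set K) T"
  proof (cases "T \<in> K")
    case False
    have "pmf (pmf_of_set (A S)) T = 0" if S: "S \<in> K" for S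
    proof -
      have "A S \<subseteq> K" using A[OF S] by blast
      then have "T \<notin> A S" using False by blast
      then show ?thesis using finA[OF S] by simp
    qed
    then have "(\<Sum>S\<in>K. pmf (pmf_of_set (A S)) T) = 0" by simp
    moreover have "pmf (pmf_of_set K) T = 0" using False fin ne by simp
    ultimately show ?thesis using lhs by simp
  next
    case True
    have AT: "A T \<subseteq> K" "T \<in> A T" "\<forall>U\<in>A T. A U = A T" using A[OF True] by blast+
    have eq: "pmf (pmf_of_set (A S)) T = (if S \<in> A T then 1 / real (card (A T)) else 0)" if S: "S \<in> K" for S
    proof -
      have AS: "A S \<subseteq> K" "S \<in> A S" "\<forall>U\<in>A S. A U = A S" using A[OF S] by blast+
      show ?thesis
      proof (cases "T \<in> A S")
        case True
        then have "A T = A S" using AS(3) by blast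
        then show ?thesis using True AS(2) finA[OF S] by simp
      next
        case False
        have "S \<notin> A T"
        proof
          assume "S \<in> A T"
          then have "A S = A T" using AT(3) by blast
          then show False using False AT(2) by simp
        qed
        then show ?thesis using False finA[OF S] by simp
      qed
    qed
    have "(\<Sum>S\<in>K. pmf (pmf_of_set (A S)) T) = (\<Sum>S\<in>K. if S \<in> A T then 1 / real (card (A T)) else 0)"
      using eq by (rule sum.cong[OF refl])
    also have "\<dots> = (\<Sum>S\<in>K \<inter> A T. 1 / real (card (A T)))"
      using fin by (rule sum.inter_restrict[symmetric])
    also have "K \<inter> A T = A T" using AT(1) by blast
    also have "(\<Sum>S\<in>A T. 1 / real (card (A T))) = 1" using finA[OF True] by simp
    finally have "(\<Sum>S\<in>K. pmf (pmf_of_set (A S)) T) = 1" .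
    moreover have "pmf (pmf_of_set K) T = 1 / real (card K)" using True fin ne by simp
    ultimately show ?thesis using lhs by simp
  qed
qed



lemma As_props:
  assumes m: "1 \<le> m" and S: "S \<subseteq> {1..2^m}" "card S = k"
  shows "As m S \<subseteq> {S. S \<subseteq> {1..2^m} \<and> card S = k}" and "S \<in> As m S"
    and "\<And>T. T \<in> As m S \<Longrightarrow> As m T = As m S"
proof -
  have S1: "S \<subseteq> {1..}" using S by auto
  show "As m S \<subseteq> {S. S \<subseteq> {1..2^m} \<and> card S = k}"
  proof
    fix T assume "T \<in> As m S"
    then obtain g where g: "\<And>s. s \<in> S \<Longrightarrow> g s \<in> Dy (ex m S s) s" "T = g ` S" unfolding As_def by auto
    have "inj_on g S" using G_inv(1)[OF m S1 g(1)] by blast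
    then have "card T = k" using g(2) S(2) by (simp add: card_image)
    moreover have "T \<subseteq> {1..2^m}"
    proof
      fix y assume "y \<in> T"
      then obtain s where s: "s \<in> S" "y = g s" using g(2) by auto
      have "ex m S s \<le> m" using lmin_le_m[of m S s] by (simp add: ex_def)
      then have "Dy (ex m S s) s \<subseteq> {1..2^m}" using Dy_sub s S(1) by blast
      then show "y \<in> {1..2^m}" using g(1)[OF s(1)] s by auto
    qed
    ultimately show "T \<in> {S. S \<subseteq> {1..2^m} \<and> card S = k}" by simp
  qed
  show "S \<in> As m S" unfolding As_def using S1 by (auto intro!: exI[of _ id] self_Dy simp: subset_iff)
  fix T assume "T \<in> As m S"
  then obtain g where g: "\<And>s. s \<in> S \<Longrightarrow> g s \<in> Dy (ex m S s) s" "T = g ` S" unfolding As_def by auto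
  have GT: "Gs m T = Gs m S" using G_inv(2)[OF m S1 g(1)] g(2) by simp
  have T1: "T \<subseteq> {1..}" using g by (auto simp: mem_Dy)
  show "As m T = As m S"
    using image_PiE_As[OF m T1] image_PiE_As[OF m S1] GT by simp
qed

lemma perfect_Gs:
  assumes m: "1 \<le> m" and k: "k \<le> 2^m"
  shows "perfect (2^m) k (map_pmf (Gs m) (pmf_of_set {S. S \<subseteq> {1..2^m} \<and> card S = k}))"
proof -
  define K where "K = {S. S \<subseteq> {1..(2::nat)^m} \<and> card S = k}"
  have finK: "finite K" unfolding K_def by simp
  have "card K = 2^m choose k" unfolding K_def using n_subsets[of "{1..(2::nat)^m}" k] by simp
  then have neK: "K \<noteq> {}" using k by (metis card.empty zero_less_binomial_iff less_numeral_extra(3))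
  have "Sets_rand (map_pmf (Gs m) (pmf_of_set K)) = bind_pmf (pmf_of_set K) (\<lambda>S. Sets_sys (Gs m S))"
    unfolding Sets_rand_def by (simp add: bind_map_pmf)
  also have "\<dots> = bind_pmf (pmf_of_set K) (\<lambda>S. pmf_of_set (As m S))"
  proof (rule bind_pmf_cong[OF refl])
    fix S assume "S \<in> set_pmf (pmf_of_set K)"
    then have "S \<in> K" using finK neK by simp
    then have "S \<subseteq> {1..}" "finite S" unfolding K_def by (auto intro: finite_subset)
    then show "Sets_sys (Gs m S) = pmf_of_set (As m S)"
      using Sets_sys_Gs[OF m] by blast
  qed
  also have "\<dots> = pmf_of_set K"
  proof (rule bind_classes[OF finK neK])
    fix S assume "S \<in> K"
    then have S: "S \<subseteq> {1..2^m}" "card S = k" unfolding K_def by auto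
    show "As m S \<subseteq> K \<and> S \<in> As m S \<and> (\<forall>T\<in>As m S. As m T = As m S)"
      using As_props[OF m S] unfolding K_def by blast
  qed
  finally show ?thesis unfolding perfect_def K_def by simp
qed

lemma isys_Gs:
  assumes m: "1 \<le> m" and S: "S \<subseteq> {1..2^m}" "card S = k"
  shows "interval_system (2^m) k (Gs m S)"
proof -
  have S1: "S \<subseteq> {1..}" using S by auto
  have fin: "finite S" using S finite_subset by blast
  have sub: "Dy (ex m S s) s \<subseteq> {1..2^m}" if "s \<in> S" for s
  proof -
    have "ex m S s \<le> m" using lmin_le_m[of m S s] by (simp add: ex_def)
    then show ?thesis using Dy_sub that S(1) by blast
  qed
  show ?thesis unfolding interval_system_def
  proof (intro conjI ballI impI)
    show "finite (Gs m S)" using fin by (simp add: Gs_def)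
    show "card (Gs m S) = k" unfolding Gs_def using card_image[OF Dmap_inj[OF m S1]] S(2) by simp
    show "is_interval I" if "I \<in> Gs m S" for I using that Dy_interval by (auto simp: Gs_def)
    show "I \<subseteq> {1..2^m}" if "I \<in> Gs m S" for I using that sub by (auto simp: Gs_def)
    show "I \<inter> J = {}" if "I \<in> Gs m S" "J \<in> Gs m S" "I \<noteq> J" for I J
      using that Dy_disj[OF m S1] unfolding Gs_def by auto
  qed
qed

lemma valid_Gs:
  assumes m: "1 \<le> m" and S: "S \<subseteq> {1..2^m}" "card S = k" and k: "4 * k \<le> 2^m"
  shows "valid_sys (2^m) (Gs m S)"
proof -
  have S1: "S \<subseteq> {1..}" using S by auto
  have fin: "finite S" using S finite_subset by blast
  define B where "B = (\<lambda>s. Dy (lmin m S s - 1) s)"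
  have Bsub: "B s \<subseteq> {1..2^m}" if "s \<in> S" for s
  proof -
    have "lmin m S s - 1 \<le> m" using lmin_le_m[of m S s] by simp
    then show ?thesis unfolding B_def using Dy_sub[of s m "lmin m S s - 1"] that S(1) by blast
  qed
  have Bdisj: "B s \<inter> B s' = {}" if s: "s \<in> S" "s' \<in> S" "s \<noteq> s'" for s s'
  proof (rule ccontr)
    assume "B s \<inter> B s' \<noteq> {}"
    then obtain x where x: "x \<in> B s" "x \<in> B s'" by blast
    define l where "l = lmin m S s" define l' where "l' = lmin m S s'"
    have hx: "blk (l - 1) x = blk (l - 1) s" "blk (l' - 1) x = blk (l' - 1) s'"
      using x by (auto simp: B_def mem_Dy l_def l'_def)
    have l1: "1 \<le> l" "1 \<le> l'" using lmin_pos[OF m S1] s l_def l'_def by auto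
    show False
    proof (cases "l' \<le> l")
      case True
      then have "blk (l - 1) x = blk (l - 1) s'" using blk_mono[OF hx(2)] by simp
      then have "lmin m S s \<le> l - 1" using lmin_le[OF s(2) s(3)[symmetric]] hx(1) by simp
      then show ?thesis using l1 l_def by simp
    next
      case False
      then have "blk (l' - 1) x = blk (l' - 1) s" using blk_mono[OF hx(1)] by simp
      then have "lmin m S s' \<le> l' - 1" using lmin_le[OF s(1) s(3)] hx(2) by simp
      then show ?thesis using l1 l'_def by simp
    qed
  qed
  have cardU: "card (\<Union>(B ` S)) = (\<Sum>s\<in>S. card (B s))"
  proof (rule card_UN_disjoint[OF fin])
    show "\<forall>i\<in>S. finite (B i)" unfolding B_def Dy_def by simp
    show "\<forall>i\<in>S. \<forall>j\<in>S. i \<noteq> j \<longrightarrow> B i \<inter> B j = {}" using Bdisj by blast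
  qed
  have "card (\<Union>(B ` S)) \<le> card {1..(2::nat)^m}" using Bsub by (intro card_mono) auto
  then have sumB: "(\<Sum>s\<in>S. card (B s)) \<le> 2^m" using cardU by simp
  have each: "4 * 2 ^ ex m S s \<le> card (B s) + 4" if "s \<in> S" for s
  proof (cases "3 \<le> lmin m S s")
    case True
    then have "lmin m S s - 1 = (ex m S s) + 2" by (simp add: ex_def)
    then show ?thesis by (simp add: B_def card_Dy power_add)
  next
    case False then show ?thesis by (simp add: ex_def)
  qed
  have "4 * (\<Sum>s\<in>S. 2 ^ ex m S s) \<le> (\<Sum>s\<in>S. card (B s) + 4)"
    unfolding sum_distrib_left using each by (intro sum_mono) auto
  also have "\<dots> = (\<Sum>s\<in>S. card (B s)) + 4 * k" using S(2) by (simp add: sum.distrib)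
  finally have main: "4 * (\<Sum>s\<in>S. (2::nat) ^ ex m S s) \<le> 2 * 2^m" using sumB k by linarith
  have "(\<Sum>I\<in>Gs m S. card I) = (\<Sum>s\<in>S. card (Dy (ex m S s) s))"
    unfolding Gs_def by (rule sum.reindex[OF Dmap_inj[OF m S1], unfolded comp_def])
  also have "\<dots> = (\<Sum>s\<in>S. 2 ^ ex m S s)" by (simp add: card_Dy)
  finally have "(\<Sum>I\<in>Gs m S. card I) * 4 \<le> 2 * 2^m" using main by simp
  then have "real ((\<Sum>I\<in>Gs m S. card I) * 4) \<le> real (2 * 2^m)" by (rule of_nat_mono)
  then have "real (\<Sum>I\<in>Gs m S. card I) * 4 \<le> 2 * 2^m" by simp
  then show ?thesis unfolding valid_sys_def by simp
qed



definition hh :: "nat \<Rightarrow> nat \<Rightarrow> nat \<Rightarrow> real" where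
  "hh m x y = (\<Sum>l\<in>{1..m}. if blk l x = blk l y then 1 / 2^l else 0)"

lemma hh_nonneg: "0 \<le> hh m x y" unfolding hh_def by (intro sum_nonneg) auto

lemma val_Gs_bound:
  assumes m: "1 \<le> m" and S: "S \<subseteq> {1..2^m}"
  shows "val_sys (Gs m S) \<le> 8 * real (card S) / 2^m + 8 * (\<Sum>s\<in>S. \<Sum>s'\<in>S-{s}. hh m s s')"
proof -
  have S1: "S \<subseteq> {1..}" using S by auto
  have fin: "finite S" using S finite_subset by blast
  have "val_sys (Gs m S) = (\<Sum>s\<in>S. 1 / real (card (Dy (ex m S s) s)))"
    unfolding val_sys_def Gs_def by (rule sum.reindex[OF Dmap_inj[OF m S1], unfolded comp_def])
  also have "\<dots> = (\<Sum>s\<in>S. 1 / 2 ^ ex m S s)" by (simp add: card_Dy)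
  also have "\<dots> \<le> (\<Sum>s\<in>S. 8 * (1 / 2^m + (\<Sum>s'\<in>S-{s}. hh m s s')))"
  proof (rule sum_mono)
    fix s assume s: "s \<in> S"
    define l where "l = lmin m S s"
    have l1: "1 \<le> l" "l \<le> m" using lmin_pos[OF m S1 s] lmin_le_m l_def by auto
    have a: "1 / (2::real) ^ ex m S s \<le> 8 / 2 ^ l"
    proof (cases "3 \<le> l")
      case True
      then have "l = ex m S s + 3" by (simp add: ex_def l_def)
      then show ?thesis by (simp add: power_add)
    next
      case False
      then have "(2::real) ^ l \<le> 2^3" by (intro power_increasing) auto
      moreover have "ex m S s = 0" using False by (simp add: ex_def l_def)
      ultimately show ?thesis by (simp add: field_simps)
    qed
    have b: "1 / (2::real) ^ l \<le> 1 / 2^m + (\<Sum>s'\<in>S-{s}. hh m s s')"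
    proof (cases "l = m")
      case True
      have "0 \<le> (\<Sum>s'\<in>S-{s}. hh m s s')" by (intro sum_nonneg hh_nonneg)
      then show ?thesis using True by simp
    next
      case False
      then obtain s' where s': "s' \<in> S" "s' \<noteq> s" "blk l s = blk l s'" using lmin_P[of m S s] l_def by auto
      have "1 / (2::real) ^ l = (if blk l s = blk l s' then 1 / 2^l else 0)" using s' by simp
      also have "\<dots> \<le> hh m s s'" unfolding hh_def
      proof (rule member_le_sum[where f = "\<lambda>l. if blk l s = blk l s' then 1 / 2^l else 0"])
        show "l \<in> {1..m}" using l1 by simp
        show "0 \<le> (if blk x s = blk x s' then 1 / (2::real)^x else 0)" if "x \<in> {1..m} - {l}" for x by simp
        show "finite {1..m}" by simp
      qed
      also have "\<dots> \<le> (\<Sum>s'\<in>S-{s}. hh m s s')"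
      proof (rule member_le_sum)
        show "s' \<in> S - {s}" using s' by simp
        show "0 \<le> hh m s x" if "x \<in> S - {s} - {s'}" for x by (rule hh_nonneg)
        show "finite (S - {s})" using fin by simp
      qed
      finally have "1 / (2::real) ^ l \<le> (\<Sum>s'\<in>S-{s}. hh m s s')" .
      moreover have "0 \<le> 1 / (2::real) ^ m" by simp
      ultimately show ?thesis by linarith
    qed
    show "1 / 2 ^ ex m S s \<le> 8 * (1 / 2^m + (\<Sum>s'\<in>S-{s}. hh m s s'))"
    proof -
      have "8 / (2::real) ^ l = 8 * (1 / 2 ^ l)" by simp
      also have "\<dots> \<le> 8 * (1 / 2^m + (\<Sum>s'\<in>S-{s}. hh m s s'))" using b by (rule mult_left_mono) simp
      finally show ?thesis using a by linarith
    qed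
  qed
  also have "\<dots> = 8 * real (card S) / 2^m + 8 * (\<Sum>s\<in>S. \<Sum>s'\<in>S-{s}. hh m s s')"
    by (simp add: sum.distrib sum_distrib_left)
  finally show ?thesis .
qed

lemma hh_sum_bound:
  assumes x: "x \<in> {1..2^m}"
  shows "(\<Sum>y\<in>{1..2^m}-{x}. hh m x y) \<le> m"
proof -
  have "(\<Sum>y\<in>{1..2^m}-{x}. hh m x y) =
        (\<Sum>l\<in>{1..m}. \<Sum>y\<in>{1..2^m}-{x}. if blk l x = blk l y then 1 / 2^l else 0)"
    unfolding hh_def by (rule sum.swap)
  also have "\<dots> \<le> (\<Sum>l\<in>{1..m}. (1::real))"
  proof (rule sum_mono)
    fix l assume "l \<in> {1..m}"
    have "(\<Sum>y\<in>{1..2^m}-{x}. if blk l x = blk l y then 1 / (2::real)^l else 0)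
        = real (card {y \<in> {1..2^m}-{x}. blk l x = blk l y}) * (1 / 2^l)"
      by (simp add: sum.If_cases Int_def)
    also have "card {y \<in> {1..2^m}-{x}. blk l x = blk l y} \<le> card (Dy l x)"
    proof (rule card_mono)
      show "finite (Dy l x)" by (simp add: Dy_def)
      show "{y \<in> {1..2^m}-{x}. blk l x = blk l y} \<subseteq> Dy l x" by (auto simp: mem_Dy)
    qed
    then have "real (card {y \<in> {1..2^m}-{x}. blk l x = blk l y}) * (1 / 2^l) \<le> real (card (Dy l x)) * (1 / 2^l)"
      by (intro mult_right_mono) auto
    also have "\<dots> = 1" by (simp add: card_Dy)
    finally show "(\<Sum>y\<in>{1..2^m}-{x}. if blk l x = blk l y then 1 / (2::real)^l else 0) \<le> 1" .
  qed
  also have "\<dots> = m" by simp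
  finally show ?thesis .
qed



lemma abs_id: "(p::nat) * A = B * q \<Longrightarrow> r * B = C * s \<Longrightarrow> A * (r * p) = C * (s * q)"
proof -
  assume h1: "p * A = B * q" and h2: "r * B = C * s"
  have "A * (r * p) = r * (p * A)" by (simp only: ac_simps)
  also have "\<dots> = (r * B) * q" unfolding h1 by (simp only: ac_simps)
  also have "\<dots> = C * (s * q)" unfolding h2 by (simp only: ac_simps)
  finally show ?thesis .
qed

lemma choose_id: "((t - 2) choose (k - 2)) * (t * (t - 1)) = (t choose k) * (k * (k - 1))"
  if "2 \<le> t" "2 \<le> k" for t k :: nat
proof -
  define a where "a = t - 2"
  define b where "b = k - 2"
  have a: "t = Suc (Suc a)" using that(1) a_def by simp
  have b: "k = Suc (Suc b)" using that(2) b_def by simp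
  have 1: "Suc a * (a choose b) = (Suc a choose Suc b) * Suc b" by (rule Suc_times_binomial_eq)
  have 2: "Suc (Suc a) * (Suc a choose Suc b) = (Suc (Suc a) choose Suc (Suc b)) * Suc (Suc b)"
    by (rule Suc_times_binomial_eq)
  have e: "t - 2 = a" "k - 2 = b" "t - 1 = Suc a" "k - 1 = Suc b" using a b by simp_all
  show ?thesis unfolding e unfolding a b by (rule abs_id[OF 1 2])
qed

lemma count_pairs:
  assumes U: "finite U" and x: "x \<in> U" and y: "y \<in> U" and xy: "x \<noteq> y"
  shows "card {S. S \<subseteq> U \<and> card S = k \<and> x \<in> S \<and> y \<in> S} * (card U * (card U - 1))
       = card {S. S \<subseteq> U \<and> card S = k} * (k * (k - 1))"
proof (cases "2 \<le> k")
  case False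
  have "{S. S \<subseteq> U \<and> card S = k \<and> x \<in> S \<and> y \<in> S} = {}"
  proof (rule ccontr)
    assume "{S. S \<subseteq> U \<and> card S = k \<and> x \<in> S \<and> y \<in> S} \<noteq> {}"
    then obtain S where S: "S \<subseteq> U" "card S = k" "x \<in> S" "y \<in> S" by auto
    have "card {x, y} \<le> card S" using S U by (intro card_mono) (auto intro: finite_subset)
    then show False using xy S(2) False by simp
  qed
  then have c0: "card {S. S \<subseteq> U \<and> card S = k \<and> x \<in> S \<and> y \<in> S} = 0" by (simp only: card.empty)
  have k0: "k * (k - 1) = 0" using False by (cases k) auto
  show ?thesis unfolding c0 k0 by simp
next
  case True
  have U2: "2 \<le> card U"
  proof -
    have "card {x, y} \<le> card U" using x y U by (intro card_mono) auto
    then show ?thesis using xy by simp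
  qed
  let ?P = "{B. B \<subseteq> U - {x, y} \<and> card B = k - 2}"
  have img: "{S. S \<subseteq> U \<and> card S = k \<and> x \<in> S \<and> y \<in> S} = (\<lambda>B. insert x (insert y B)) ` ?P"
  proof
    show "{S. S \<subseteq> U \<and> card S = k \<and> x \<in> S \<and> y \<in> S} \<subseteq> (\<lambda>B. insert x (insert y B)) ` ?P"
    proof
      fix S assume S: "S \<in> {S. S \<subseteq> U \<and> card S = k \<and> x \<in> S \<and> y \<in> S}"
      have finS: "finite S" using S U finite_subset by auto
      have "card (S - {x, y}) = k - 2" using S finS xy by (auto simp: card_Diff_subset)
      moreover have "S = insert x (insert y (S - {x, y}))" using S by auto
      ultimately show "S \<in> (\<lambda>B. insert x (insert y B)) ` ?P" using S by blast
    qed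
  next
    show "(\<lambda>B. insert x (insert y B)) ` ?P \<subseteq> {S. S \<subseteq> U \<and> card S = k \<and> x \<in> S \<and> y \<in> S}"
    proof
      fix S assume "S \<in> (\<lambda>B. insert x (insert y B)) ` ?P"
      then obtain B where B: "B \<subseteq> U - {x, y}" "card B = k - 2" "S = insert x (insert y B)" by auto
      have finB: "finite B" using B U finite_subset by auto
      have nx: "x \<notin> B" "y \<notin> B" using B(1) by auto
      have "card S = Suc (Suc (card B))" using B(3) finB nx xy by simp
      then have "card S = k" using B(2) True by simp
      then show "S \<in> {S. S \<subseteq> U \<and> card S = k \<and> x \<in> S \<and> y \<in> S}" using B x y by auto
    qed
  qed
  have inj: "inj_on (\<lambda>B. insert x (insert y B)) ?P"
  proof (rule inj_onI)
    fix B B' assume "B \<in> ?P" "B' \<in> ?P" "insert x (insert y B) = insert x (insert y B')"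
    then show "B = B'" by blast
  qed
  have "card {S. S \<subseteq> U \<and> card S = k \<and> x \<in> S \<and> y \<in> S} = card ?P" using img inj by (simp add: card_image)
  also have "\<dots> = card (U - {x, y}) choose (k - 2)" using U by (intro n_subsets) auto
  also have "card (U - {x, y}) = card U - 2" using U x y xy by (simp add: card_Diff_subset)
  finally have c1: "card {S. S \<subseteq> U \<and> card S = k \<and> x \<in> S \<and> y \<in> S} = (card U - 2) choose (k - 2)" .
  have c2: "card {S. S \<subseteq> U \<and> card S = k} = card U choose k" using U by (rule n_subsets)
  show ?thesis unfolding c1 c2 by (rule choose_id[OF U2 True])
qed

lemma double_count:
  fixes f :: "nat \<Rightarrow> nat \<Rightarrow> real"
  assumes U: "finite U" and KU: "\<And>S. S \<in> K \<Longrightarrow> S \<subseteq> U" and finK: "finite K"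
  shows "(\<Sum>S\<in>K. \<Sum>s\<in>S. \<Sum>s'\<in>S-{s}. f s s') =
         (\<Sum>x\<in>U. \<Sum>y\<in>U-{x}. f x y * real (card {S\<in>K. x \<in> S \<and> y \<in> S}))"
proof -
  have inner: "(\<Sum>s\<in>S. \<Sum>s'\<in>S-{s}. f s s') = (\<Sum>x\<in>U. \<Sum>y\<in>U-{x}. if x \<in> S \<and> y \<in> S then f x y else 0)"
    if S: "S \<subseteq> U" for S
  proof -
    have "(\<Sum>x\<in>U. \<Sum>y\<in>U-{x}. if x \<in> S \<and> y \<in> S then f x y else 0)
        = (\<Sum>x\<in>U. if x \<in> S then (\<Sum>y\<in>U-{x}. if y \<in> S then f x y else 0) else 0)"
      by (intro sum.cong refl) auto
    also have "\<dots> = (\<Sum>x\<in>U \<inter> S. (\<Sum>y\<in>U-{x}. if y \<in> S then f x y else 0))"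
      using U by (rule sum.inter_restrict[symmetric])
    also have "U \<inter> S = S" using S by blast
    also have "(\<Sum>x\<in>S. (\<Sum>y\<in>U-{x}. if y \<in> S then f x y else 0)) = (\<Sum>x\<in>S. (\<Sum>y\<in>(U-{x}) \<inter> S. f x y))"
    proof (rule sum.cong[OF refl])
      fix x assume "x \<in> S"
      show "(\<Sum>y\<in>U-{x}. if y \<in> S then f x y else 0) = (\<Sum>y\<in>(U-{x}) \<inter> S. f x y)"
        using U by (intro sum.inter_restrict[symmetric]) simp
    qed
    also have "\<dots> = (\<Sum>x\<in>S. (\<Sum>y\<in>S-{x}. f x y))"
    proof (rule sum.cong[OF refl])
      fix x assume "x \<in> S"
      have "(U-{x}) \<inter> S = S - {x}" using S by blast
      then show "(\<Sum>y\<in>(U-{x}) \<inter> S. f x y) = (\<Sum>y\<in>S-{x}. f x y)" by simp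
    qed
    finally show ?thesis by simp
  qed
  have "(\<Sum>S\<in>K. \<Sum>s\<in>S. \<Sum>s'\<in>S-{s}. f s s') =
        (\<Sum>S\<in>K. \<Sum>x\<in>U. \<Sum>y\<in>U-{x}. if x \<in> S \<and> y \<in> S then f x y else 0)"
  proof (rule sum.cong[OF refl])
    fix S assume "S \<in> K"
    then show "(\<Sum>s\<in>S. \<Sum>s'\<in>S-{s}. f s s') = (\<Sum>x\<in>U. \<Sum>y\<in>U-{x}. if x \<in> S \<and> y \<in> S then f x y else 0)"
      using inner KU by blast
  qed
  also have "\<dots> = (\<Sum>x\<in>U. \<Sum>S\<in>K. \<Sum>y\<in>U-{x}. if x \<in> S \<and> y \<in> S then f x y else 0)"
    by (rule sum.swap)
  also have "\<dots> = (\<Sum>x\<in>U. \<Sum>y\<in>U-{x}. \<Sum>S\<in>K. if x \<in> S \<and> y \<in> S then f x y else 0)"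
    by (intro sum.cong refl sum.swap)
  also have "\<dots> = (\<Sum>x\<in>U. \<Sum>y\<in>U-{x}. f x y * real (card {S\<in>K. x \<in> S \<and> y \<in> S}))"
    using finK by (intro sum.cong refl) (simp add: sum.If_cases Int_def mult.commute)
  finally show ?thesis .
qed



lemma final_ineq:
  fixes k t m :: real
  assumes "1 \<le> k" "8 \<le> t" "1 \<le> m"
  shows "8 * k / t + 8 * (k * (k - 1) * m) / (t - 1) \<le> 10 * k^2 * m / t"
proof -
  have "8 * k * (t - 1) + 8 * (k * (k - 1) * m) * t \<le> 10 * k^2 * m * (t - 1)"
  proof -
    have "8 * k * (t - 1) \<le> 8 * k * m * t" using assms by (simp add: mult_mono)
    moreover have "0 \<le> 2 * k * k * m * (t - 5)" using assms by simp
    ultimately show ?thesis by (simp add: power2_eq_square algebra_simps)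
  qed
  moreover have t0: "t \<noteq> 0" "t - 1 \<noteq> 0" "0 < t * (t - 1)" using assms by auto
  have e1: "8 * k / t + 8 * (k * (k - 1) * m) / (t - 1) = (8 * k * (t - 1) + 8 * (k * (k - 1) * m) * t) / (t * (t - 1))"
    using t0 by (simp add: field_simps)
  have e2: "10 * k^2 * m / t = (10 * k^2 * m * (t - 1)) / (t * (t - 1))"
    using t0 by (simp add: field_simps)
  show ?thesis unfolding e1 e2 using calculation t0(3) by (intro divide_right_mono) auto
qed

theorem mainTheorem15:
  fixes k t :: nat
  assumes "k \<ge> 1" and "t \<ge> 1" and "\<exists>m. t = 2 ^ m" and "real k \<le> real t / 6"
  shows "\<exists>\<F> :: nat set set pmf.
           (\<forall>F\<in>set_pmf \<F>. interval_system t k F) \<and>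
           valid_rand t \<F> \<and> perfect t k \<F> \<and>
           val_rand \<F> \<le> 10 * real k ^ 2 * log 2 (real t) / real t"
proof -
  obtain m where tm: "t = 2^m" using assms(3) by blast
  have k6: "6 * k \<le> t" using assms(4) by simp
  have m3: "3 \<le> m"
  proof (rule ccontr)
    assume "\<not> 3 \<le> m"
    then have "m \<le> 2" by simp
    then have "(2::nat)^m \<le> 2^2" by (intro power_increasing) auto
    then show False using k6 assms(1) tm by simp
  qed
  have m1: "1 \<le> m" using m3 by simp
  have "(2::nat)^3 \<le> 2^m" using m3 by (intro power_increasing) auto
  then have t8: "8 \<le> t" using tm by simp
  define U where "U = {1..t}"
  define K where "K = {S. S \<subseteq> U \<and> card S = k}"
  have finU: "finite U" unfolding U_def by simp
  have finK: "finite K" unfolding K_def U_def by simp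
  have "card K = t choose k" unfolding K_def using n_subsets[OF finU, of k] U_def by simp
  moreover have "k \<le> t" using k6 by simp
  ultimately have "0 < card K" by (simp add: zero_less_binomial_iff)
  then have neK: "K \<noteq> {}" by auto
  have cK: "0 < card K" using neK finK by (simp add: card_gt_0_iff)
  define \<F> where "\<F> = map_pmf (Gs m) (pmf_of_set K)"
  have setF: "set_pmf \<F> = Gs m ` K" using finK neK by (simp add: \<F>_def)
  have isys: "\<forall>F\<in>set_pmf \<F>. interval_system t k F"
    using isys_Gs[OF m1] unfolding setF K_def U_def tm by auto
  have valid: "valid_rand t \<F>"
    unfolding valid_rand_def setF using valid_Gs[OF m1] k6 unfolding K_def U_def tm by auto
  have perf: "perfect t k \<F>"
    using perfect_Gs[OF m1, of k] k6 unfolding \<F>_def K_def U_def tm by simp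
  have vr: "val_rand \<F> = (\<Sum>S\<in>K. val_sys (Gs m S)) / real (card K)"
    unfolding val_rand_def \<F>_def using finK neK by (simp add: integral_pmf_of_set)
  define c :: real where "c = real k * (real k - 1) / (real t * (real t - 1))"
  have c0: "0 \<le> c" unfolding c_def using t8 assms(1) by simp
  have bnd: "val_sys (Gs m S) \<le> 8 * real k / t + 8 * (\<Sum>s\<in>S. \<Sum>s'\<in>S-{s}. hh m s s')" if "S \<in> K" for S
  proof -
    have "S \<subseteq> {1..2^m}" "card S = k" using that unfolding K_def U_def tm by auto
    then show ?thesis using val_Gs_bound[OF m1, of S] tm by simp
  qed
  have "(\<Sum>S\<in>K. val_sys (Gs m S)) \<le>
        (\<Sum>S\<in>K. 8 * real k / t + 8 * (\<Sum>s\<in>S. \<Sum>s'\<in>S-{s}. hh m s s'))"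
    using bnd by (rule sum_mono)
  also have "\<dots> = real (card K) * (8 * real k / t) + 8 * (\<Sum>S\<in>K. \<Sum>s\<in>S. \<Sum>s'\<in>S-{s}. hh m s s')"
    by (simp add: sum.distrib sum_distrib_left)
  also have "(\<Sum>S\<in>K. \<Sum>s\<in>S. \<Sum>s'\<in>S-{s}. hh m s s') =
         (\<Sum>x\<in>U. \<Sum>y\<in>U-{x}. hh m x y * real (card {S\<in>K. x \<in> S \<and> y \<in> S}))"
  proof (rule double_count[OF finU _ finK])
    fix S assume "S \<in> K" then show "S \<subseteq> U" unfolding K_def by simp
  qed
  also have "\<dots> = (\<Sum>x\<in>U. \<Sum>y\<in>U-{x}. hh m x y * (real (card K) * c))"
  proof (intro sum.cong refl)
    fix x y assume xy: "x \<in> U" "y \<in> U - {x}"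
    have y: "y \<in> U" "x \<noteq> y" using xy by auto
    have "{S\<in>K. x \<in> S \<and> y \<in> S} = {S. S \<subseteq> U \<and> card S = k \<and> x \<in> S \<and> y \<in> S}" unfolding K_def by auto
    moreover have "card U = t" unfolding U_def by simp
    ultimately have N: "card {S\<in>K. x \<in> S \<and> y \<in> S} * (t * (t - 1)) = card K * (k * (k - 1))"
      using count_pairs[OF finU xy(1) y(1) y(2), of k] unfolding K_def by simp
    have t1: "1 \<le> t" using t8 by simp
    have "real (card {S\<in>K. x \<in> S \<and> y \<in> S} * (t * (t - 1))) = real (card K * (k * (k - 1)))"
      using N by (rule arg_cong)
    then have N': "real (card {S\<in>K. x \<in> S \<and> y \<in> S}) * (real t * (real t - 1)) = real (card K) * (real k * (real k - 1))"
      using t1 assms(1) by (simp add: of_nat_diff)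
    have tt: "real t * (real t - 1) > 0" using t8 by simp
    have "real (card {S\<in>K. x \<in> S \<and> y \<in> S}) =
          real (card {S\<in>K. x \<in> S \<and> y \<in> S}) * (real t * (real t - 1)) / (real t * (real t - 1))"
      using tt t8 by (intro nonzero_mult_div_cancel_right[symmetric]) simp
    also have "\<dots> = real (card K) * (real k * (real k - 1)) / (real t * (real t - 1))"
      by (subst N') (rule refl)
    also have "\<dots> = real (card K) * c" unfolding c_def by simp
    finally have "real (card {S\<in>K. x \<in> S \<and> y \<in> S}) = real (card K) * c" .
    then show "hh m x y * real (card {S\<in>K. x \<in> S \<and> y \<in> S}) = hh m x y * (real (card K) * c)" by simp
  qed
  also have "\<dots> = (real (card K) * c) * (\<Sum>x\<in>U. \<Sum>y\<in>U-{x}. hh m x y)"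
    by (simp add: sum_distrib_left mult.commute)
  also have "\<dots> \<le> (real (card K) * c) * (\<Sum>x\<in>U. real m)"
  proof (rule mult_left_mono)
    show "(\<Sum>x\<in>U. \<Sum>y\<in>U-{x}. hh m x y) \<le> (\<Sum>x\<in>U. real m)"
    proof (rule sum_mono)
      fix x assume "x \<in> U"
      then show "(\<Sum>y\<in>U-{x}. hh m x y) \<le> real m" using hh_sum_bound[of x m] unfolding U_def tm by simp
    qed
    show "0 \<le> real (card K) * c" using c0 by simp
  qed
  also have "(\<Sum>x\<in>U. real m) = real t * m" unfolding U_def by simp
  finally have sumle: "(\<Sum>S\<in>K. val_sys (Gs m S)) \<le> real (card K) * (8 * real k / t)
      + 8 * ((real (card K) * c) * (real t * m))" by simp
  have "val_rand \<F> \<le> 8 * real k / t + 8 * (c * (real t * m))"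
  proof -
    have "val_rand \<F> \<le> (real (card K) * (8 * real k / t)
      + 8 * ((real (card K) * c) * (real t * m))) / real (card K)"
      unfolding vr using sumle cK by (intro divide_right_mono) auto
    also have "\<dots> = 8 * real k / t + 8 * (c * (real t * m))"
      using cK by (simp add: field_simps)
    finally show ?thesis .
  qed
  also have "8 * (c * (real t * m)) = 8 * (real k * (real k - 1) * real m) / (real t - 1)"
    unfolding c_def using t8 by (simp add: field_simps)
  also have "8 * real k / t + 8 * (real k * (real k - 1) * real m) / (real t - 1) \<le> 10 * real k ^ 2 * real m / real t"
    by (rule final_ineq) (use assms(1) t8 m1 in auto)
  also have "real m = log 2 (real t)" unfolding tm by (simp add: log_nat_power)
  finally have vb: "val_rand \<F> \<le> 10 * real k ^ 2 * log 2 (real t) / real t" .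
  show ?thesis using isys valid perf vb by blast
qed

end
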